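(* Let $G\in\mathrm{C}^2(\mathbb{R})$ be coercive and $p_1<p_2$ with $G'(p_1)<0<G'(p_2)$, and let $L=\frac{G'(p_2)}{G'(p_2)-G'(p_1)}\in(0,1)$. For any $\ell\in(0,\min\{L,1-L\})$ there is $f\in\mathcal{C}(L,\ell)$ such that $\int_0^1 G'(f(x))\,dx=0$.
   Context: $G$ coercive means $G(p)\to\infty$ as $p\to\pm\infty$. $\mathrm{C}^{1,1}(\mathbb{R})$ is the set of $f\in\mathrm{C}^1(\mathbb{R})$ with $f'$ Lipschitz. $\mathcal{C}(L,\ell)$ is the set of $1$-periodic $f\in\mathrm{C}^{1,1}(\mathbb{R})$ with $p_1\le f(x)\le p_2$ for all $x$, $f(x)=p_1$ for $x\in[0,L-\ell]$, and $f(x)=p_2$ for $x\in[L,1-\ell]$. *)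

theory Defs
  imports "HOL-Analysis.Analysis"
begin

definition C2_real :: "(real \<Rightarrow> real) \<Rightarrow> bool" where
  "C2_real G \<longleftrightarrow> (\<forall>x. G differentiable at x) \<and> (\<forall>x. deriv G differentiable at x)
      \<and> continuous_on UNIV (deriv (deriv G))"

definition coercive :: "(real \<Rightarrow> real) \<Rightarrow> bool" where
  "coercive G \<longleftrightarrow> filterlim G at_top at_top \<and> filterlim G at_top at_bot"

definition C11_real :: "(real \<Rightarrow> real) \<Rightarrow> bool" where
  "C11_real f \<longleftrightarrow> (\<forall>x. f differentiable at x) \<and> (\<exists>K. lipschitz_on K UNIV (deriv f))"

definition classC :: "real \<Rightarrow> real \<Rightarrow> real \<Rightarrow> real \<Rightarrow> (real \<Rightarrow> real) set" where
  "classC p1 p2 L l = {f. (\<forall>x. f (x + 1) = f x) \<and> C11_real f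
      \<and> (\<forall>x. p1 \<le> f x \<and> f x \<le> p2)
      \<and> (\<forall>x\<in>{0..L - l}. f x = p1) \<and> (\<forall>x\<in>{L..1 - l}. f x = p2)}"

end

theory Submission
  imports Defs
begin

definition cl :: "real \<Rightarrow> real" where "cl u = max 0 (min 1 u)"
definition Sf :: "real \<Rightarrow> real" where "Sf u = 3 * (cl u)^2 - 2 * (cl u)^3"
definition Sd :: "real \<Rightarrow> real" where "Sd u = 6 * cl u * (1 - cl u)"

lemma deriv_paste:
  fixes f :: "real \<Rightarrow> real"
  assumes "(f has_field_derivative D) (at x within {..x})"
      and "(f has_field_derivative D) (at x within {x..})"
  shows "(f has_field_derivative D) (at x)"
proof -
  have U: "{..x} \<union> {x..} = UNIV" by auto
  have "((\<lambda>y. (f y - f x) / (y - x)) \<longlongrightarrow> D) (at x within ({..x} \<union> {x..}))"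
    using assms unfolding has_field_derivative_iff Lim_within_Un by simp
  then show ?thesis unfolding has_field_derivative_iff U by simp
qed

lemma P_deriv: "((\<lambda>v. 3 * v^2 - 2 * v^3) has_real_derivative (6 * v * (1 - v))) (at v within s)"
  by (auto intro!: derivative_eq_intros simp: algebra_simps power2_eq_square)

lemma Sf_deriv: "(Sf has_real_derivative Sd u) (at u)"
proof -
  consider "u < 0" | "u = 0" | "0 < u \<and> u < 1" | "u = 1" | "1 < u" by linarith
  then show ?thesis
  proof cases
    case 1
    have "((\<lambda>_. 0) has_real_derivative Sd u) (at u)" using 1 by (simp add: Sd_def cl_def)
    then show ?thesis
      by (rule has_field_derivative_transform_within_open[where S="{..<0}"])
         (use 1 in \<open>auto simp: Sf_def Sd_def cl_def\<close>)
  next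
    case 5
    have "((\<lambda>_. 1) has_real_derivative Sd u) (at u)" using 5 by (simp add: Sd_def cl_def)
    then show ?thesis
      by (rule has_field_derivative_transform_within_open[where S="{1<..}"])
         (use 5 in \<open>auto simp: Sf_def Sd_def cl_def\<close>)
  next
    case 3
    have e: "Sd u = 6 * u * (1 - u)" using 3 by (simp add: Sd_def cl_def)
    show ?thesis
      by (rule has_field_derivative_transform_within_open[OF P_deriv[of u UNIV, unfolded e[symmetric]], where S="{0<..<1}"])
         (use 3 in \<open>auto simp: Sf_def Sd_def cl_def\<close>)
  next
    case 2
    have e: "Sd u = 0" "6 * u * (1 - u) = 0" using 2 by (simp_all add: Sd_def cl_def)
    show ?thesis
    proof (rule deriv_paste)
      have "((\<lambda>_. 0) has_real_derivative Sd u) (at u within {..u})" using e by simp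
      then show "(Sf has_real_derivative Sd u) (at u within {..u})"
        by (rule has_field_derivative_transform_within[where d=1])
           (use 2 in \<open>auto simp: Sf_def Sd_def cl_def\<close>)
      show "(Sf has_real_derivative Sd u) (at u within {u..})"
        by (rule has_field_derivative_transform_within[OF P_deriv[of u, unfolded e(2) e(1)[symmetric]], where d=1])
           (use 2 in \<open>auto simp: Sf_def Sd_def cl_def dist_real_def\<close>)
    qed
  next
    case 4
    have e: "Sd u = 0" "6 * u * (1 - u) = 0" using 4 by (simp_all add: Sd_def cl_def)
    show ?thesis
    proof (rule deriv_paste)
      have "((\<lambda>_. 1) has_real_derivative Sd u) (at u within {u..})" using e by simp
      then show "(Sf has_real_derivative Sd u) (at u within {u..})"
        by (rule has_field_derivative_transform_within[where d=1])
           (use 4 in \<open>auto simp: Sf_def Sd_def cl_def\<close>)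
      show "(Sf has_real_derivative Sd u) (at u within {..u})"
        by (rule has_field_derivative_transform_within[OF P_deriv[of u, unfolded e(2) e(1)[symmetric]], where d=1])
           (use 4 in \<open>auto simp: Sf_def Sd_def cl_def dist_real_def\<close>)
    qed
  qed
qed

lemma Sf_chain[derivative_intros]:
  "(g has_real_derivative g') (at x within s) \<Longrightarrow> ((\<lambda>x. Sf (g x)) has_real_derivative (Sd (g x) * g')) (at x within s)"
  using DERIV_chain2[OF Sf_deriv] by blast

lemma Sf_cont: "continuous_on A Sf"
  using Sf_deriv by (meson DERIV_isCont continuous_at_imp_continuous_on)

lemma Sf_low: "u \<le> 0 \<Longrightarrow> Sf u = 0" by (simp add: Sf_def cl_def)
lemma Sf_high: "1 \<le> u \<Longrightarrow> Sf u = 1" by (simp add: Sf_def cl_def)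
lemma Sd_low: "u \<le> 0 \<Longrightarrow> Sd u = 0" by (simp add: Sd_def cl_def)
lemma Sd_high: "1 \<le> u \<Longrightarrow> Sd u = 0" by (simp add: Sd_def cl_def)

lemma cl_mono: "u \<le> v \<Longrightarrow> cl u \<le> cl v" by (simp add: cl_def)
lemma cl_range: "0 \<le> cl u" "cl u \<le> 1" by (auto simp: cl_def)
lemma cl_lip: "\<bar>cl u - cl v\<bar> \<le> \<bar>u - v\<bar>" by (simp add: cl_def)

lemma Sf_mono: assumes "u \<le> v" shows "Sf u \<le> Sf v"
proof -
  have a: "cl u \<le> cl v" "0 \<le> cl u" "cl v \<le> 1" using cl_mono[OF assms] cl_range by auto
  define x where "x = cl u" define y where "y = cl v"
  have "3 * x^2 - 2 * x^3 \<le> 3 * y^2 - 2 * y^3"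
  proof -
    have "3 * y^2 - 2 * y^3 - (3 * x^2 - 2 * x^3) = (y - x) * (3*(x+y) - 2*(x^2+x*y+y^2))"
      by (simp add: algebra_simps power2_eq_square power3_eq_cube)
    moreover have "x^2 \<le> x" "y^2 \<le> y" "x*y \<le> x" using a unfolding x_def y_def
      by (auto simp: power2_eq_square mult_left_le mult_right_le_one_le)
    ultimately show ?thesis using a unfolding x_def[symmetric] y_def[symmetric]
      by (smt (verit) mult_nonneg_nonneg)
  qed
  then show ?thesis by (simp add: Sf_def x_def y_def)
qed

lemma Sf_range: "0 \<le> Sf u" "Sf u \<le> 1"
  using Sf_mono[of 0 u] Sf_mono[of u 0] Sf_mono[of u 1] Sf_mono[of 1 u]
  by (cases "u \<le> 0"; cases "u \<le> 1"; auto simp: Sf_low Sf_high)+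

lemma Sd_range: "0 \<le> Sd u" "Sd u \<le> 3/2"
proof -
  have "0 \<le> cl u" "cl u \<le> 1" by (rule cl_range)+
  moreover have "cl u * (1 - cl u) \<le> 1/4"
  proof -
    have "0 \<le> (cl u - 1/2) * (cl u - 1/2)" by simp
    then show ?thesis by (simp add: algebra_simps)
  qed
  ultimately show "0 \<le> Sd u" "Sd u \<le> 3/2" by (auto simp: Sd_def)
qed

lemma Sd_lip: "\<bar>Sd u - Sd v\<bar> \<le> 6 * \<bar>u - v\<bar>"
proof -
  define x where "x = cl u" define y where "y = cl v"
  have r: "0 \<le> x" "x \<le> 1" "0 \<le> y" "y \<le> 1" "\<bar>x - y\<bar> \<le> \<bar>u - v\<bar>"
    using cl_range cl_lip unfolding x_def y_def by auto
  have "Sd u - Sd v = 6 * (x - y) * (1 - x - y)"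
    by (simp add: Sd_def x_def y_def algebra_simps)
  then have "\<bar>Sd u - Sd v\<bar> = 6 * \<bar>(x - y) * (1 - x - y)\<bar>" 
    by (metis abs_mult abs_of_nonneg mult.assoc zero_le_numeral)
  moreover have "\<bar>1 - x - y\<bar> \<le> 1" using r by auto
  moreover have "\<bar>(x - y) * (1 - x - y)\<bar> \<le> \<bar>x - y\<bar>"
    using r by (simp add: abs_mult mult_left_le)
  ultimately have "\<bar>Sd u - Sd v\<bar> \<le> 6 * \<bar>x - y\<bar>"
    by (smt (verit))
  then show ?thesis using r by (smt (verit))
qed


lemma frac_local:
  fixes \<phi> :: "real \<Rightarrow> real"
  assumes lo: "\<And>t. t \<le> a \<Longrightarrow> \<phi> t = c" and hi: "\<And>t. b \<le> t \<Longrightarrow> \<phi> t = c"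
    and "0 < a" "b < 1" "b - 1 < x - of_int k" "x - of_int k < 1 + a" "a \<le> b"
  shows "\<phi> (frac x) = \<phi> (x - of_int k)"
proof -
  consider "x - of_int k < 0" | "0 \<le> x - of_int k \<and> x - of_int k < 1" | "1 \<le> x - of_int k" by linarith
  then show ?thesis
  proof cases
    case 1
    moreover have "of_int k - 1 \<le> x" using assms(3-7) by linarith
    ultimately have "floor x = k - 1" by (intro floor_unique) auto
    then have "frac x = x - of_int k + 1" by (simp add: frac_def)
    then show ?thesis using 1 assms by (simp add: lo hi)
  next
    case 2
    then have "floor x = k" by (subst floor_eq_iff) auto
    then show ?thesis by (simp add: frac_def)
  next
    case 3
    then have "floor x = k + 1" using assms(3-7) by (intro floor_unique) auto
    then have "frac x = x - of_int k - 1" by (simp add: frac_def)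
    then show ?thesis using 3 assms by (simp add: lo hi)
  qed
qed

lemma periodic_C11:
  fixes \<phi> \<phi>' :: "real \<Rightarrow> real"
  assumes der: "\<And>y. (\<phi> has_real_derivative \<phi>' y) (at y)"
    and lo: "\<And>t. t \<le> a \<Longrightarrow> \<phi> t = c" and hi: "\<And>t. b \<le> t \<Longrightarrow> \<phi> t = c"
    and lo': "\<And>t. t \<le> a \<Longrightarrow> \<phi>' t = 0" and hi': "\<And>t. b \<le> t \<Longrightarrow> \<phi>' t = 0"
    and ab: "0 < a" "b < 1" and ab2: "a \<le> b"
    and M: "\<And>y. \<bar>\<phi>' y\<bar> \<le> M"
    and K: "\<And>y z. \<bar>\<phi>' y - \<phi>' z\<bar> \<le> K * \<bar>y - z\<bar>" "0 \<le> K"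
  shows "\<And>x. ((\<lambda>x. \<phi> (frac x)) has_real_derivative \<phi>' (frac x)) (at x)"
    and "\<exists>K. lipschitz_on K UNIV (deriv (\<lambda>x. \<phi> (frac x)))"
proof -
  define \<delta> where "\<delta> = min a (1 - b)"
  have \<delta>: "0 < \<delta>" using ab by (simp add: \<delta>_def)
  have loc: "\<phi> (frac y) = \<phi> (y - of_int (floor x))" "\<phi>' (frac y) = \<phi>' (y - of_int (floor x))"
    if "dist y x < \<delta>" for x y
  proof -
    have f: "of_int (floor x) \<le> x" "x < of_int (floor x) + 1" by linarith+
    have d: "\<bar>y - x\<bar> < a" "\<bar>y - x\<bar> < 1 - b" using that by (auto simp: \<delta>_def dist_real_def)
    have r: "b - 1 < y - of_int (floor x)" "y - of_int (floor x) < 1 + a"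
      using f d by linarith+
    show "\<phi> (frac y) = \<phi> (y - of_int (floor x))"
      by (rule frac_local[OF lo hi ab r ab2])
    show "\<phi>' (frac y) = \<phi>' (y - of_int (floor x))"
      by (rule frac_local[OF lo' hi' ab r ab2])
  qed
  show D: "((\<lambda>x. \<phi> (frac x)) has_real_derivative \<phi>' (frac x)) (at x)" for x
  proof -
    have "((\<lambda>y. y - of_int (floor x)) has_real_derivative 1) (at x)"
      by (auto intro!: derivative_eq_intros)
    from DERIV_chain2[OF der this]
    have "((\<lambda>y. \<phi> (y - of_int (floor x))) has_real_derivative \<phi>' (frac x)) (at x)"
      by (simp add: frac_def)
    then show ?thesis
      by (rule has_field_derivative_transform_within_open[where S="ball x \<delta>"])
         (use \<delta> loc in \<open>auto simp: dist_commute\<close>)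
  qed
  have dv: "deriv (\<lambda>x. \<phi> (frac x)) = (\<lambda>x. \<phi>' (frac x))"
    using D DERIV_imp_deriv by blast
  define K2 where "K2 = max K (2 * M / \<delta>)"
  have M0: "0 \<le> M" using M[of 0] by linarith
  show "\<exists>K. lipschitz_on K UNIV (deriv (\<lambda>x. \<phi> (frac x)))"
  proof (intro exI lipschitz_onI)
    show "0 \<le> K2" using K(2) by (simp add: K2_def)
    fix x y :: real
    show "dist (deriv (\<lambda>x. \<phi> (frac x)) x) (deriv (\<lambda>x. \<phi> (frac x)) y) \<le> K2 * dist x y"
    proof (cases "dist y x < \<delta>")
      case True
      have "\<phi>' (frac x) = \<phi>' (x - of_int (floor x))" using loc(2)[of x x] \<delta> by simp
      moreover have "\<phi>' (frac y) = \<phi>' (y - of_int (floor x))" using loc(2)[OF True] .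
      ultimately have "\<bar>\<phi>' (frac x) - \<phi>' (frac y)\<bar> \<le> K * \<bar>x - y\<bar>"
        using K(1)[of "x - of_int (floor x)" "y - of_int (floor x)"] by simp
      also have "\<dots> \<le> K2 * \<bar>x - y\<bar>" by (simp add: K2_def mult_right_mono)
      finally show ?thesis by (simp add: dv dist_real_def)
    next
      case False
      have "\<bar>\<phi>' (frac x) - \<phi>' (frac y)\<bar> \<le> 2 * M" using M[of "frac x"] M[of "frac y"] by linarith
      also have "\<dots> = (2 * M / \<delta>) * \<delta>" using \<delta> by simp
      also have "\<dots> \<le> (2 * M / \<delta>) * dist x y" using False M0 \<delta>
        by (intro mult_left_mono) (auto simp: dist_commute)
      also have "\<dots> \<le> K2 * dist x y" by (intro mult_right_mono) (auto simp: K2_def)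
      finally show ?thesis by (simp add: dv dist_real_def)
    qed
  qed
qed


lemma subst_affine:
  fixes F :: "real \<Rightarrow> real"
  assumes F: "continuous_on {0..1} F" and w: "0 < w"
  shows "((\<lambda>x. F ((x - s) / w)) has_integral (w * integral {0..1} F)) {s..s+w}"
proof -
  have "((\<lambda>x. (1 / w) *\<^sub>R F ((x - s) / w)) has_integral
          integral {(s - s) / w..(s + w - s) / w} F) {s..s+w}"
  proof (rule has_integral_substitution[where c=0 and d=1])
    show "s \<le> s + w" "(s - s) / w \<le> (s + w - s) / w" using w by auto
    show "(\<lambda>x. (x - s) / w) ` {s..s + w} \<subseteq> {0..1}" using w by (auto simp: field_simps)
    show "continuous_on {0..1} F" by (rule F)
    show "((\<lambda>x. (x - s) / w) has_real_derivative 1 / w) (at x within {s..s + w})" for x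
      using w by (auto intro!: derivative_eq_intros)
  qed
  then have "((\<lambda>x. (1 / w) *\<^sub>R F ((x - s) / w)) has_integral integral {0..1} F) {s..s+w}"
    using w by simp
  from has_integral_cmul[OF this, of w] show ?thesis using w by simp
qed

definition hh :: "real \<Rightarrow> real \<Rightarrow> real \<Rightarrow> real \<Rightarrow> real \<Rightarrow> real \<Rightarrow> real" where
  "hh p1 p2 a b w y = p1 + (p2 - p1) * (Sf ((y - a) / w) - Sf ((y - b) / w))"
definition hder :: "real \<Rightarrow> real \<Rightarrow> real \<Rightarrow> real \<Rightarrow> real \<Rightarrow> real \<Rightarrow> real" where
  "hder p1 p2 a b w y = (p2 - p1) / w * (Sd ((y - a) / w) - Sd ((y - b) / w))"

lemma hh_deriv: "w \<noteq> 0 \<Longrightarrow> (hh p1 p2 a b w has_real_derivative hder p1 p2 a b w y) (at y)"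
  unfolding hh_def hder_def
  by (auto intro!: derivative_eq_intros simp: field_simps)


lemma hh_range: "0 < w \<Longrightarrow> a \<le> b \<Longrightarrow> p1 \<le> p2 \<Longrightarrow> p1 \<le> hh p1 p2 a b w y \<and> hh p1 p2 a b w y \<le> p2"
proof -
  assume w: "0 < w" and ab: "a \<le> b" and p: "p1 \<le> p2"
  have "(y - b) / w \<le> (y - a) / w" using w ab by (simp add: divide_right_mono)
  then have m: "Sf ((y - b) / w) \<le> Sf ((y - a) / w)" by (rule Sf_mono)
  have r: "0 \<le> Sf ((y - b) / w)" "Sf ((y - a) / w) \<le> 1" by (rule Sf_range)+
  have "0 \<le> (p2 - p1) * (Sf ((y - a) / w) - Sf ((y - b) / w))"
    using m p by simp
  moreover have "(p2 - p1) * (Sf ((y - a) / w) - Sf ((y - b) / w)) \<le> (p2 - p1) * 1"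
    using m r p by (intro mult_left_mono) auto
  ultimately show ?thesis by (simp add: hh_def)
qed

theorem lemma5p1:
  fixes G :: "real \<Rightarrow> real" and p1 p2 L l :: real
  assumes "C2_real G" and "coercive G" and "p1 < p2"
    and "deriv G p1 < 0" and "0 < deriv G p2"
    and "L = deriv G p2 / (deriv G p2 - deriv G p1)"
    and "0 < l" and "l < min L (1 - L)"
  shows "\<exists>f \<in> classC p1 p2 L l. integral {0..1} (\<lambda>x. deriv G (f x)) = 0"
proof -
  define g where "g = deriv G"
  have cg: "continuous_on UNIV g"
    using assms(1) unfolding C2_real_def g_def
    by (meson continuous_at_imp_continuous_on differentiable_imp_continuous_within)
  define a0 where "a0 = g p1"
  define b0 where "b0 = g p2"
  define D where "D = b0 - a0"
  have a0: "a0 < 0" and b0: "0 < b0" using assms(4,5) by (auto simp: a0_def b0_def g_def)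
  have D: "0 < D" using a0 b0 by (simp add: D_def)
  have LD: "L = b0 / D" using assms(6) by (simp add: D_def a0_def b0_def g_def)
  have l: "0 < l" "l < L" "l < 1 - L" using assms(7,8) by auto
  have "compact (g ` {p1..p2})"
    by (rule compact_continuous_image) (use cg continuous_on_subset in auto)
  then have "bounded (g ` {p1..p2})" by (rule compact_imp_bounded)
  then obtain K0 where "\<forall>x\<in>g ` {p1..p2}. norm x \<le> K0" unfolding bounded_iff by blast
  then have K0: "\<And>p. p \<in> {p1..p2} \<Longrightarrow> \<bar>g p\<bar> \<le> K0" by auto
  have K00: "0 \<le> K0" using K0[of p1] assms(3) by force
  define F1 where "F1 u = g (p1 + (p2 - p1) * Sf u)" for u
  define F2 where "F2 u = g (p1 + (p2 - p1) * (1 - Sf u))" for u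
  have cF1: "continuous_on {0..1} F1" unfolding F1_def
    by (intro continuous_on_compose2[OF cg] continuous_intros Sf_cont) auto
  have cF2: "continuous_on {0..1} F2" unfolding F2_def
    by (intro continuous_on_compose2[OF cg] continuous_intros Sf_cont) auto
  define J1 where "J1 = integral {0..1} F1"
  define J2 where "J2 = integral {0..1} F2"
  have inrange: "p1 + (p2 - p1) * t \<in> {p1..p2}" if "0 \<le> t" "t \<le> 1" for t
  proof -
    have "(p2 - p1) * t \<le> (p2 - p1) * 1" using that assms(3) by (intro mult_left_mono) auto
    moreover have "0 \<le> (p2 - p1) * t" using that assms(3) by simp
    ultimately show ?thesis by simp
  qed
  have J1: "\<bar>J1\<bar> \<le> K0"
  proof -
    have "norm J1 \<le> K0 * (1 - 0)" unfolding J1_def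
      by (rule integral_bound[OF _ cF1]) (use K0 inrange Sf_range in \<open>auto simp: F1_def\<close>)
    then show ?thesis by simp
  qed
  have J2: "\<bar>J2\<bar> \<le> K0"
  proof -
    have "norm J2 \<le> K0 * (1 - 0)" unfolding J2_def
      by (rule integral_bound[OF _ cF2]) (use K0 inrange Sf_range in \<open>auto simp: F2_def\<close>)
    then show ?thesis by simp
  qed
  define B where "B = 2 * K0 + \<bar>a0\<bar> + 2 * \<bar>b0\<bar>"
  define E where "E = J1 + J2 - a0 / 2 - 3 * b0 / 2"
  have EB: "\<bar>E\<bar> \<le> B" using J1 J2 by (simp add: E_def B_def)
  have B0: "0 \<le> B" using K00 by (simp add: B_def)
  define w where "w = l * D / (2 * (D + B))"
  have w0: "0 < w" using l D B0 by (simp add: w_def)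
  have DB: "0 < D + B" "D + B \<noteq> 0" using D B0 by auto
  have "w * (D + B) = l * D / 2" using DB unfolding w_def by (simp add: field_simps)
  then have wl: "w * (B + D) / D = l / 2" using D by (simp add: add.commute)
  define \<beta> where "\<beta> = 1 - l / 2 - w / 2"
  define X where "X = w * E / D"
  define \<alpha> where "\<alpha> = L - l / 2 + X"
  define Y where "Y = w * B / D"
  have wEB: "\<bar>X\<bar> \<le> Y" unfolding X_def Y_def
    using EB w0 D by (simp add: abs_mult divide_right_mono mult_left_mono)
  have wB: "Y = l / 2 - w" using wl D unfolding Y_def by (simp add: field_simps)
  have wBp: "0 \<le> Y" using w0 B0 D unfolding Y_def by simp
  have X1: "- (l / 2 - w) \<le> X" using wEB wB by linarith
  have X2: "X \<le> l / 2 - w" using wEB wB by linarith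
  have cons: "L - l \<le> \<alpha>" "\<alpha> + w \<le> L" "1 - l \<le> \<beta>" "\<beta> + w < 1" "0 < \<alpha>" "\<alpha> + w \<le> \<beta>"
    using X1 X2 wB wBp l w0 unfolding \<alpha>_def \<beta>_def by linarith+
  define h where "h = hh p1 p2 \<alpha> \<beta> w"
  define f where "f x = h (frac x)" for x
  have hlo: "h t = p1" if "t \<le> \<alpha>" for t
  proof -
    have "(t - \<alpha>) / w \<le> 0" "(t - \<beta>) / w \<le> 0" using that cons w0 by (auto simp: divide_le_0_iff)
    then show ?thesis by (simp add: h_def hh_def Sf_low)
  qed
  have hhi: "h t = p1" if "\<beta> + w \<le> t" for t
  proof -
    have "1 \<le> (t - \<alpha>) / w" "1 \<le> (t - \<beta>) / w" using that cons w0 by (auto simp: field_simps)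
    then show ?thesis by (simp add: h_def hh_def Sf_high)
  qed
  have dlo: "hder p1 p2 \<alpha> \<beta> w t = 0" if "t \<le> \<alpha>" for t
  proof -
    have "(t - \<alpha>) / w \<le> 0" "(t - \<beta>) / w \<le> 0" using that cons w0 by (auto simp: divide_le_0_iff)
    then show ?thesis by (simp add: hder_def Sd_low)
  qed
  have dhi: "hder p1 p2 \<alpha> \<beta> w t = 0" if "\<beta> + w \<le> t" for t
  proof -
    have "1 \<le> (t - \<alpha>) / w" "1 \<le> (t - \<beta>) / w" using that cons w0 by (auto simp: field_simps)
    then show ?thesis by (simp add: hder_def Sd_high)
  qed
  define M where "M = (p2 - p1) / w * 3"
  define K where "K = (p2 - p1) / w * (12 / w)"
  have hdM: "\<bar>hder p1 p2 \<alpha> \<beta> w y\<bar> \<le> M" for y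
  proof -
    have "\<bar>Sd ((y - \<alpha>) / w) - Sd ((y - \<beta>) / w)\<bar> \<le> 3"
      using Sd_range[of "(y - \<alpha>) / w"] Sd_range[of "(y - \<beta>) / w"] by linarith
    moreover have "\<bar>(p2 - p1) / w\<bar> = (p2 - p1) / w" "0 \<le> (p2 - p1) / w" using assms(3) w0 by auto
    ultimately show ?thesis unfolding hder_def M_def abs_mult
      by (metis mult_left_mono)
  qed
  have hdK: "\<bar>hder p1 p2 \<alpha> \<beta> w y - hder p1 p2 \<alpha> \<beta> w z\<bar> \<le> K * \<bar>y - z\<bar>" for y z
  proof -
    have e1: "\<bar>(y - \<alpha>) / w - (z - \<alpha>) / w\<bar> = \<bar>y - z\<bar> / w"
      "\<bar>(y - \<beta>) / w - (z - \<beta>) / w\<bar> = \<bar>y - z\<bar> / w" using w0 by (simp_all add: field_simps)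
    have "\<bar>(Sd ((y - \<alpha>) / w) - Sd ((y - \<beta>) / w)) - (Sd ((z - \<alpha>) / w) - Sd ((z - \<beta>) / w))\<bar>
        \<le> 12 / w * \<bar>y - z\<bar>"
      using Sd_lip[of "(y - \<alpha>) / w" "(z - \<alpha>) / w"] Sd_lip[of "(y - \<beta>) / w" "(z - \<beta>) / w"]
      unfolding e1 by simp
    then have "(p2 - p1) / w * \<bar>(Sd ((y - \<alpha>) / w) - Sd ((y - \<beta>) / w)) - (Sd ((z - \<alpha>) / w) - Sd ((z - \<beta>) / w))\<bar>
        \<le> (p2 - p1) / w * (12 / w * \<bar>y - z\<bar>)"
      using assms(3) w0 by (intro mult_left_mono) auto
    moreover have "hder p1 p2 \<alpha> \<beta> w y - hder p1 p2 \<alpha> \<beta> w z = (p2 - p1) / w * ((Sd ((y - \<alpha>) / w) - Sd ((y - \<beta>) / w)) - (Sd ((z - \<alpha>) / w) - Sd ((z - \<beta>) / w)))"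
      unfolding hder_def by (simp only: right_diff_distrib)
    moreover have "0 \<le> (p2 - p1) / w" using assms(3) w0 by auto
    ultimately show ?thesis unfolding K_def
      by (metis abs_mult abs_of_nonneg mult.assoc)
  qed
  have K0': "0 \<le> K" using assms(3) w0 by (simp add: K_def)
  have PC: "\<And>x. ((\<lambda>x. h (frac x)) has_real_derivative hder p1 p2 \<alpha> \<beta> w (frac x)) (at x)"
      "\<exists>K. lipschitz_on K UNIV (deriv (\<lambda>x. h (frac x)))"
    using periodic_C11[of h "hder p1 p2 \<alpha> \<beta> w" \<alpha> p1 "\<beta> + w", OF _ hlo hhi dlo dhi _ _ _ hdM hdK K0']
      hh_deriv[of w] w0 cons unfolding h_def by auto
  have fC: "f \<in> classC p1 p2 L l"
    unfolding classC_def
  proof (intro CollectI conjI ballI allI)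
    show "f (x + 1) = f x" for x
      using frac_add_of_int_right[of x 1] by (simp add: f_def)
    show "C11_real f" unfolding C11_real_def f_def using PC
      by (auto simp: real_differentiable_def)
    show "p1 \<le> f x" "f x \<le> p2" for x
      using hh_range[of w \<alpha> \<beta> p1 p2] w0 cons assms(3) by (auto simp: f_def h_def)
    show "f x = p1" if "x \<in> {0..L - l}" for x
    proof -
      have "frac x = x" using that l by (auto simp: frac_eq)
      then show ?thesis using that cons hlo by (simp add: f_def)
    qed
    show "f x = p2" if "x \<in> {L..1 - l}" for x
    proof -
      have fx: "frac x = x" using that l by (auto simp: frac_eq)
      have "1 \<le> (x - \<alpha>) / w" "(x - \<beta>) / w \<le> 0" using that cons w0
        by (auto simp: field_simps divide_le_0_iff)
      then show ?thesis by (simp add: f_def fx h_def hh_def Sf_low Sf_high)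
    qed
  qed
  have P1: "((\<lambda>x. g (h x)) has_integral (\<alpha> * a0)) {0..\<alpha>}"
  proof -
    from has_integral_const_real[of a0 0 \<alpha>] have "((\<lambda>x. a0) has_integral (\<alpha> * a0)) {0..\<alpha>}" using cons by simp
    then show ?thesis by (rule has_integral_eq[rotated]) (simp add: hlo a0_def)
  qed
  have P2: "((\<lambda>x. g (h x)) has_integral (w * J1)) {\<alpha>..\<alpha>+w}"
  proof -
    have "((\<lambda>x. F1 ((x - \<alpha>) / w)) has_integral (w * J1)) {\<alpha>..\<alpha>+w}"
      unfolding J1_def by (rule subst_affine[OF cF1 w0])
    moreover have "F1 ((x - \<alpha>) / w) = g (h x)" if "x \<in> {\<alpha>..\<alpha>+w}" for x
    proof -
      have "(x - \<beta>) / w \<le> 0" using that cons w0 by (auto simp: divide_le_0_iff)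
      then show ?thesis by (simp add: h_def hh_def F1_def Sf_low)
    qed
    ultimately show ?thesis by (rule has_integral_eq[rotated]) simp
  qed
  have P3: "((\<lambda>x. g (h x)) has_integral ((\<beta> - (\<alpha> + w)) * b0)) {\<alpha>+w..\<beta>}"
  proof -
    from has_integral_const_real[of b0 "\<alpha>+w" \<beta>] have "((\<lambda>x. b0) has_integral ((\<beta> - (\<alpha> + w)) * b0)) {\<alpha>+w..\<beta>}" using cons by simp
    moreover have "b0 = g (h x)" if "x \<in> {\<alpha>+w..\<beta>}" for x
    proof -
      have "1 \<le> (x - \<alpha>) / w" "(x - \<beta>) / w \<le> 0" using that cons w0
        by (auto simp: field_simps divide_le_0_iff)
      then show ?thesis by (simp add: h_def hh_def Sf_low Sf_high b0_def)
    qed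
    ultimately show ?thesis by (rule has_integral_eq[rotated]) simp
  qed
  have P4: "((\<lambda>x. g (h x)) has_integral (w * J2)) {\<beta>..\<beta>+w}"
  proof -
    have "((\<lambda>x. F2 ((x - \<beta>) / w)) has_integral (w * J2)) {\<beta>..\<beta>+w}"
      unfolding J2_def by (rule subst_affine[OF cF2 w0])
    moreover have "F2 ((x - \<beta>) / w) = g (h x)" if "x \<in> {\<beta>..\<beta>+w}" for x
    proof -
      have "1 \<le> (x - \<alpha>) / w" using that cons w0 by (auto simp: field_simps)
      then show ?thesis by (simp add: h_def hh_def F2_def Sf_high)
    qed
    ultimately show ?thesis by (rule has_integral_eq[rotated]) simp
  qed
  have P5: "((\<lambda>x. g (h x)) has_integral ((1 - (\<beta> + w)) * a0)) {\<beta>+w..1}"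
  proof -
    from has_integral_const_real[of a0 "\<beta>+w" 1] have "((\<lambda>x. a0) has_integral ((1 - (\<beta> + w)) * a0)) {\<beta>+w..1}" using cons by simp
    then show ?thesis by (rule has_integral_eq[rotated]) (simp add: hhi a0_def)
  qed
  have "((\<lambda>x. g (h x)) has_integral
      (\<alpha> * a0 + w * J1 + (\<beta> - (\<alpha> + w)) * b0 + w * J2 + (1 - (\<beta> + w)) * a0)) {0..1}"
  proof -
    have Q1: "((\<lambda>x. g (h x)) has_integral (\<alpha> * a0 + w * J1)) {0..\<alpha>+w}"
      using has_integral_combine[OF _ _ P1 P2] cons w0 by simp
    have Q2: "((\<lambda>x. g (h x)) has_integral (\<alpha> * a0 + w * J1 + (\<beta> - (\<alpha> + w)) * b0)) {0..\<beta>}"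
      using has_integral_combine[OF _ _ Q1 P3] cons w0 by simp
    have Q3: "((\<lambda>x. g (h x)) has_integral (\<alpha> * a0 + w * J1 + (\<beta> - (\<alpha> + w)) * b0 + w * J2)) {0..\<beta>+w}"
      using has_integral_combine[OF _ _ Q2 P4] cons w0 by simp
    show ?thesis
      using has_integral_combine[OF _ _ Q3 P5] cons w0 by simp
  qed
  moreover have "\<alpha> * a0 + w * J1 + (\<beta> - (\<alpha> + w)) * b0 + w * J2 + (1 - (\<beta> + w)) * a0 = 0"
  proof -
    have aD: "\<alpha> * D = b0 - l * D / 2 + w * E" using D
      by (simp add: \<alpha>_def X_def LD field_simps)
    have "\<alpha> * a0 + w * J1 + (\<beta> - (\<alpha> + w)) * b0 + w * J2 + (1 - (\<beta> + w)) * a0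
        = - (\<alpha> * D) + (b0 - l * D / 2 + w * E)"
      by (simp add: D_def E_def \<beta>_def algebra_simps add_divide_distrib diff_divide_distrib)
    then show ?thesis using aD by simp
  qed
  ultimately have I: "integral {0..1} (\<lambda>x. g (h x)) = 0" by (simp add: integral_unique)
  have "integral {0..1} (\<lambda>x. deriv G (f x)) = integral {0..1} (\<lambda>x. g (h x))"
  proof (rule integral_cong)
    fix x assume x: "x \<in> {0..1::real}"
    have "h (frac x) = h (x - of_int 0)"
      by (rule frac_local[where \<phi>=h and a=\<alpha> and b="\<beta>+w" and c=p1 and k=0, OF hlo hhi]) (use x cons w0 in auto)
    then show "deriv G (f x) = g (h x)" by (simp add: f_def g_def)
  qed
  with I fC show ?thesis by auto
qed

end
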